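(* $(\mathbb{S},\sigma)$ is not a final $F$-coalgebra in $\mathbf{Met_3}^{L}$.
   Context: A tripointed metric space is a set with three distinct points $T,L,R$ and a metric bounded by $1$ in which $T,L,R$ have pairwise distance $1$. $\mathbf{Met_3}^{L}$: tripointed metric spaces with Lipschitz maps preserving $T,L,R$. Let $M=\{a,b,c\}$. $M\times X$ has metric $\tfrac12d(x,y)$ within a copy and $1$ between copies; $M\otimes X$ is the quotient metric space by the equivalence relation generated by $(b,T)\sim(a,L)$, $(a,R)\sim(c,T)$, $(c,L)\sim(b,R)$, with elements $m\otimes x$ and distinguished points $a\otimes T,b\otimes L,c\otimes R$; $F=M\otimes-$ with $(M\otimes f)(m\otimes x)=m\otimes f(x)$. The Sierpinski gasket $\mathbb{S}\subset\mathbb{R}^2$ is the unique nonempty compact set with $\mathbb{S}=\sigma_a(\mathbb{S})\cup\sigma_b(\mathbb{S})\cup\sigma_c(\mathbb{S})$, where $\sigma_a(x,y)=(x/2,y/2)+(1/4,\sqrt3/4)$, $\sigma_b(x,y)=(x/2,y/2)$, $\sigma_c(x,y)=(x/2,y/2)+(1/2,0)$, with the Euclidean metric and distinguished points $T=(1/2,\sqrt3/2)$, $L=(0,0)$, $R=(1,0)$. The map $\tau\colon M\otimes\mathbb{S}\to\mathbb{S}$, $\tau(m\otimes x)=\sigma_m(x)$, is a bijection preserving distinguished points, and $\sigma=\tau^{-1}$; $\sigma$ is a morphism in $\mathbf{Met_3}^{L}$, so $(\mathbb{S},\sigma)$ is an $F$-coalgebra there. *)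

theory Defs
  imports "HOL-Analysis.Analysis"
begin

record 'a tms =
  carr :: "'a set"
  dst  :: "'a \<Rightarrow> 'a \<Rightarrow> real"
  ptT  :: 'a
  ptL  :: 'a
  ptR  :: 'a

definition tri_space :: "'a tms \<Rightarrow> bool" where
  "tri_space X \<longleftrightarrow>
     (\<forall>x\<in>carr X. \<forall>y\<in>carr X. 0 \<le> dst X x y \<and> dst X x y \<le> 1
        \<and> (dst X x y = 0 \<longleftrightarrow> x = y) \<and> dst X x y = dst X y x) \<and>
     (\<forall>x\<in>carr X. \<forall>y\<in>carr X. \<forall>z\<in>carr X. dst X x z \<le> dst X x y + dst X y z) \<and>
     ptT X \<in> carr X \<and> ptL X \<in> carr X \<and> ptR X \<in> carr X \<and>
     ptT X \<noteq> ptL X \<and> ptL X \<noteq> ptR X \<and> ptT X \<noteq> ptR X \<and>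
     dst X (ptT X) (ptL X) = 1 \<and> dst X (ptL X) (ptR X) = 1 \<and> dst X (ptT X) (ptR X) = 1"

definition lip_morph :: "'a tms \<Rightarrow> 'b tms \<Rightarrow> ('a \<Rightarrow> 'b) \<Rightarrow> bool" where
  "lip_morph X Y f \<longleftrightarrow>
     (\<forall>x\<in>carr X. f x \<in> carr Y) \<and>
     f (ptT X) = ptT Y \<and> f (ptL X) = ptL Y \<and> f (ptR X) = ptR Y \<and>
     (\<exists>K\<ge>0. \<forall>x\<in>carr X. \<forall>y\<in>carr X. dst Y (f x) (f y) \<le> K * dst X x y)"

datatype mlab = Ma | Mb | Mc

definition pdist :: "('a \<Rightarrow> 'a \<Rightarrow> real) \<Rightarrow> mlab \<times> 'a \<Rightarrow> mlab \<times> 'a \<Rightarrow> real" where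
  "pdist d p q = (if fst p = fst q then d (snd p) (snd q) / 2 else 1)"

definition glue :: "'a tms \<Rightarrow> ((mlab \<times> 'a) \<times> (mlab \<times> 'a)) set" where
  "glue X = {((Mb, ptT X), (Ma, ptL X)), ((Ma, ptR X), (Mc, ptT X)), ((Mc, ptL X), (Mb, ptR X))}"

definition trel :: "'a tms \<Rightarrow> ((mlab \<times> 'a) \<times> (mlab \<times> 'a)) set" where
  "trel X = Id_on (UNIV \<times> carr X) \<union> (glue X \<union> (glue X)\<inverse>)\<^sup>+"

definition tcls :: "'a tms \<Rightarrow> mlab \<times> 'a \<Rightarrow> (mlab \<times> 'a) set" where
  "tcls X p = trel X `` {p}"

text \<open>Quotient (semi)metric: infimum over chains p0 ~> q0 ~ p1 ~> q1 ~ ... ~> qn.\<close>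
definition tdist :: "'a tms \<Rightarrow> (mlab \<times> 'a) set \<Rightarrow> (mlab \<times> 'a) set \<Rightarrow> real" where
  "tdist X P Q = Inf {(\<Sum>i\<le>n. pdist (dst X) (p i) (q i)) | n p q.
       p 0 \<in> P \<and> q n \<in> Q \<and> (\<forall>i\<le>n. p i \<in> UNIV \<times> carr X \<and> q i \<in> UNIV \<times> carr X) \<and>
       (\<forall>i<n. (q i, p (Suc i)) \<in> trel X)}"

definition tensor :: "'a tms \<Rightarrow> (mlab \<times> 'a) set tms" where
  "tensor X = \<lparr> carr = (UNIV \<times> carr X) // trel X, dst = tdist X,
                ptT = tcls X (Ma, ptT X), ptL = tcls X (Mb, ptL X), ptR = tcls X (Mc, ptR X) \<rparr>"

text \<open>(M \<otimes> f)(m \<otimes> x) = m \<otimes> f x\<close>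
definition tmap :: "'a tms \<Rightarrow> 'b tms \<Rightarrow> ('a \<Rightarrow> 'b) \<Rightarrow> (mlab \<times> 'a) set \<Rightarrow> (mlab \<times> 'b) set" where
  "tmap X Y f P = (let p = (SOME p. p \<in> P) in tcls Y (fst p, f (snd p)))"

definition is_coalg :: "'a tms \<Rightarrow> ('a \<Rightarrow> (mlab \<times> 'a) set) \<Rightarrow> bool" where
  "is_coalg X e \<longleftrightarrow> tri_space X \<and> lip_morph X (tensor X) e"

definition coalg_morph ::
  "'a tms \<Rightarrow> ('a \<Rightarrow> (mlab \<times> 'a) set) \<Rightarrow> 'b tms \<Rightarrow> ('b \<Rightarrow> (mlab \<times> 'b) set) \<Rightarrow> ('a \<Rightarrow> 'b) \<Rightarrow> bool" where
  "coalg_morph Y f X e h \<longleftrightarrow> lip_morph Y X h \<and> (\<forall>y\<in>carr Y. e (h y) = tmap Y X h (f y))"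

text \<open>Finality, tested against all coalgebras whose carrier lives in the type 'b.\<close>
definition final_coalg :: "'b itself \<Rightarrow> 'a tms \<Rightarrow> ('a \<Rightarrow> (mlab \<times> 'a) set) \<Rightarrow> bool" where
  "final_coalg (_ :: 'b itself) X e \<longleftrightarrow> is_coalg X e \<and>
     (\<forall>(Y :: 'b tms) f. is_coalg Y f \<longrightarrow>
        (\<exists>h. coalg_morph Y f X e h \<and> (\<forall>h'. coalg_morph Y f X e h' \<longrightarrow> (\<forall>y\<in>carr Y. h' y = h y))))"

definition smap :: "mlab \<Rightarrow> real \<times> real \<Rightarrow> real \<times> real" where
  "smap m = (\<lambda>(x, y). case m of
      Ma \<Rightarrow> (x / 2 + 1 / 4, y / 2 + sqrt 3 / 4)
    | Mb \<Rightarrow> (x / 2, y / 2)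
    | Mc \<Rightarrow> (x / 2 + 1 / 2, y / 2))"

definition gasket :: "(real \<times> real) set" where
  "gasket = (THE S. S \<noteq> {} \<and> compact S \<and> S = (\<Union>m. smap m ` S))"

definition Sierp :: "(real \<times> real) tms" where
  "Sierp = \<lparr> carr = gasket, dst = dist, ptT = (1 / 2, sqrt 3 / 2), ptL = (0, 0), ptR = (1, 0) \<rparr>"

definition tau :: "(mlab \<times> (real \<times> real)) set \<Rightarrow> real \<times> real" where
  "tau P = (let p = (SOME p. p \<in> P) in smap (fst p) (snd p))"

definition sigma :: "real \<times> real \<Rightarrow> (mlab \<times> (real \<times> real)) set" where
  "sigma = inv_into (carr (tensor Sierp)) tau"

end

theory Submission
  imports Defs
begin

definition gT :: "'a tms \<Rightarrow> mlab \<times> 'a \<Rightarrow> real" where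
  "gT X p = (if fst p = Ma then dst X (snd p) (ptT X) / 2 else 1/2)"

lemma trel_carr:
  assumes "tri_space X" "(p,q) \<in> trel X"
  shows "p \<in> UNIV \<times> carr X \<and> q \<in> UNIV \<times> carr X"
proof -
  have "glue X \<union> (glue X)\<inverse> \<subseteq> (UNIV \<times> carr X) \<times> (UNIV \<times> carr X)"
    using assms(1) unfolding glue_def tri_space_def by auto
  hence "(glue X \<union> (glue X)\<inverse>)\<^sup>+ \<subseteq> (UNIV \<times> carr X) \<times> (UNIV \<times> carr X)"
    by (rule trancl_subset_Sigma)
  thus ?thesis using assms(2) unfolding trel_def by (auto simp: Id_on_def)
qed

lemma g_inv:
  assumes "tri_space X" "(p,q) \<in> trel X"
  shows "gT X p = gT X q"
proof -
  have d: "dst X (ptL X) (ptT X) = 1" "dst X (ptR X) (ptT X) = 1" "dst X (ptT X) (ptT X) = 0"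
    using assms(1) unfolding tri_space_def by metis+
  have gstep: "gT X a = gT X b" if "(a,b) \<in> glue X \<union> (glue X)\<inverse>" for a b
    using that d unfolding glue_def gT_def by auto
  show ?thesis
  proof (cases "(p,q) \<in> Id_on (UNIV \<times> carr X)")
    case True thus ?thesis by (auto simp: Id_on_def)
  next
    case False
    hence "(p,q) \<in> (glue X \<union> (glue X)\<inverse>)\<^sup>+" using assms(2) unfolding trel_def by auto
    thus ?thesis
    proof (induction rule: trancl_induct)
      case (base y) thus ?case using gstep by blast
    next
      case (step y z) thus ?case using gstep by metis
    qed
  qed
qed

lemma g_lip:
  assumes "tri_space X" "p \<in> UNIV \<times> carr X" "q \<in> UNIV \<times> carr X"
  shows "gT X p - gT X q \<le> pdist (dst X) p q"
proof -
  obtain m x l y where pq: "p = (m,x)" "q = (l,y)" "x \<in> carr X" "y \<in> carr X"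
    using assms by auto
  have T: "ptT X \<in> carr X" using assms(1) unfolding tri_space_def by auto
  have b1: "0 \<le> dst X x (ptT X)" "dst X x (ptT X) \<le> 1" "0 \<le> dst X y (ptT X)" "dst X y (ptT X) \<le> 1"
    "0 \<le> dst X x y"
    using assms(1) pq T unfolding tri_space_def by auto
  have tri: "dst X x (ptT X) \<le> dst X x y + dst X y (ptT X)"
    using assms(1) pq T unfolding tri_space_def by auto
  show ?thesis using pq b1 tri unfolding gT_def pdist_def by auto
qed

lemma tri_dist:
  assumes "tri_space X" "x \<in> carr X" "y \<in> carr X"
  shows "0 \<le> dst X x y" "dst X x y \<le> 1"
  using assms unfolding tri_space_def by blast+

lemma pdist_nonneg:
  assumes "tri_space X" "p \<in> UNIV \<times> carr X" "q \<in> UNIV \<times> carr X"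
  shows "0 \<le> pdist (dst X) p q"
proof -
  have "0 \<le> dst X (snd p) (snd q)" using tri_dist[OF assms(1)] assms(2,3) by auto
  thus ?thesis unfolding pdist_def by simp
qed

lemma pdist_le1:
  assumes "tri_space X" "p \<in> UNIV \<times> carr X" "q \<in> UNIV \<times> carr X"
  shows "pdist (dst X) p q \<le> 1"
proof -
  have "dst X (snd p) (snd q) \<le> 1" using tri_dist[OF assms(1)] assms(2,3) by auto
  thus ?thesis unfolding pdist_def by simp
qed

lemma chain_bound:
  assumes "tri_space X"
  shows "(\<forall>i\<le>n. p i \<in> UNIV \<times> carr X \<and> q i \<in> UNIV \<times> carr X) \<Longrightarrow>
    (\<forall>i<n. (q i, p (Suc i)) \<in> trel X) \<Longrightarrow>
    gT X (p 0) - gT X (q n) \<le> (\<Sum>i\<le>n. pdist (dst X) (p i) (q i))"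
proof (induction n)
  case 0 thus ?case using g_lip[OF assms] by auto
next
  case (Suc n)
  have IH: "gT X (p 0) - gT X (q n) \<le> (\<Sum>i\<le>n. pdist (dst X) (p i) (q i))"
    using Suc by auto
  have "gT X (q n) = gT X (p (Suc n))" using Suc.prems g_inv[OF assms] by auto
  moreover have "gT X (p (Suc n)) - gT X (q (Suc n)) \<le> pdist (dst X) (p (Suc n)) (q (Suc n))"
    using Suc.prems g_lip[OF assms] by auto
  ultimately show ?case using IH by simp
qed

lemma in_tcls:
  assumes "a \<in> UNIV \<times> carr X" shows "a \<in> tcls X a"
  using assms unfolding tcls_def trel_def by (auto simp: Id_on_def)

definition chs :: "'a tms \<Rightarrow> (mlab \<times> 'a) set \<Rightarrow> (mlab \<times> 'a) set \<Rightarrow> real set" where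
  "chs X P Q = {(\<Sum>i\<le>n. pdist (dst X) (p i) (q i)) | n p q.
       p 0 \<in> P \<and> q n \<in> Q \<and> (\<forall>i\<le>n. p i \<in> UNIV \<times> carr X \<and> q i \<in> UNIV \<times> carr X) \<and>
       (\<forall>i<n. (q i, p (Suc i)) \<in> trel X)}"

lemma tdist_chs: "tdist X P Q = Inf (chs X P Q)"
  unfolding tdist_def chs_def ..

lemma chs_E:
  assumes "x \<in> chs X P Q"
  obtains n p q where "x = (\<Sum>i\<le>n. pdist (dst X) (p i) (q i))"
    "p 0 \<in> P" "q n \<in> Q" "\<forall>i\<le>n. p i \<in> UNIV \<times> carr X \<and> q i \<in> UNIV \<times> carr X"
    "\<forall>i<n. (q i, p (Suc i)) \<in> trel X"
  using assms unfolding chs_def by blast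

lemma chs_I0:
  assumes "a \<in> P" "b \<in> Q" "a \<in> UNIV \<times> carr X" "b \<in> UNIV \<times> carr X"
  shows "pdist (dst X) a b \<in> chs X P Q"
proof -
  have "(\<Sum>i\<le>(0::nat). pdist (dst X) ((\<lambda>_. a) i) ((\<lambda>_. b) i)) \<in> chs X P Q"
    unfolding chs_def
    apply (rule CollectI)
    apply (rule exI[of _ 0], rule exI[of _ "\<lambda>_. a"], rule exI[of _ "\<lambda>_. b"])
    using assms by simp
  thus ?thesis by simp
qed

lemma tdist_lower:
  assumes X: "tri_space X" and a: "a \<in> UNIV \<times> carr X" and b: "b \<in> UNIV \<times> carr X"
  shows "gT X a - gT X b \<le> tdist X (tcls X a) (tcls X b)"
  unfolding tdist_chs
proof (rule cInf_greatest)
  show "chs X (tcls X a) (tcls X b) \<noteq> {}"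
    using chs_I0[OF in_tcls[OF a] in_tcls[OF b] a b] by (metis empty_iff)
next
  fix x assume "x \<in> chs X (tcls X a) (tcls X b)"
  then obtain n p q where x: "x = (\<Sum>i\<le>n. pdist (dst X) (p i) (q i))"
    and h: "p 0 \<in> tcls X a" "q n \<in> tcls X b" "\<forall>i\<le>n. p i \<in> UNIV \<times> carr X \<and> q i \<in> UNIV \<times> carr X"
      "\<forall>i<n. (q i, p (Suc i)) \<in> trel X" by (rule chs_E)
  have "(a, p 0) \<in> trel X" using h(1) unfolding tcls_def by simp
  hence "gT X a = gT X (p 0)" by (rule g_inv[OF X])
  moreover have "(b, q n) \<in> trel X" using h(2) unfolding tcls_def by simp
  hence "gT X b = gT X (q n)" by (rule g_inv[OF X])
  ultimately show "gT X a - gT X b \<le> x" using chain_bound[OF X h(3,4)] x by linarith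
qed

lemma tdist_upper:
  assumes X: "tri_space X" and a: "a \<in> UNIV \<times> carr X" and b: "b \<in> UNIV \<times> carr X"
  shows "tdist X (tcls X a) (tcls X b) \<le> pdist (dst X) a b"
  unfolding tdist_chs
proof (rule cInf_lower)
  show "pdist (dst X) a b \<in> chs X (tcls X a) (tcls X b)"
    using chs_I0[OF in_tcls[OF a] in_tcls[OF b] a b] .
next
  show "bdd_below (chs X (tcls X a) (tcls X b))"
    unfolding bdd_below_def
  proof (rule exI[of _ 0], rule ballI)
    fix x assume "x \<in> chs X (tcls X a) (tcls X b)"
    then obtain n p q where x: "x = (\<Sum>i\<le>n. pdist (dst X) (p i) (q i))"
      and h0: "p 0 \<in> tcls X a" "q n \<in> tcls X b"
      and h: "\<forall>i\<le>n. p i \<in> UNIV \<times> carr X \<and> q i \<in> UNIV \<times> carr X"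
      and h1: "\<forall>i<n. (q i, p (Suc i)) \<in> trel X" by (rule chs_E)
    show "0 \<le> x" unfolding x using h by (intro sum_nonneg) (simp add: pdist_nonneg[OF X])
  qed
qed

lemma glue_map:
  assumes pts: "h (ptT Y) = ptT X" "h (ptL Y) = ptL X" "h (ptR Y) = ptR X"
    and ab: "(a,b) \<in> glue Y"
  shows "((fst a, h (snd a)), (fst b, h (snd b))) \<in> glue X"
proof -
  have "(a,b) = ((Mb, ptT Y), (Ma, ptL Y)) \<or> (a,b) = ((Ma, ptR Y), (Mc, ptT Y)) \<or>
        (a,b) = ((Mc, ptL Y), (Mb, ptR Y))" using ab unfolding glue_def by blast
  thus ?thesis
  proof (elim disjE)
    assume "(a,b) = ((Mb, ptT Y), (Ma, ptL Y))"
    hence "a = (Mb, ptT Y)" "b = (Ma, ptL Y)" by simp_all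
    thus ?thesis using pts unfolding glue_def by simp
  next
    assume "(a,b) = ((Ma, ptR Y), (Mc, ptT Y))"
    hence "a = (Ma, ptR Y)" "b = (Mc, ptT Y)" by simp_all
    thus ?thesis using pts unfolding glue_def by simp
  next
    assume "(a,b) = ((Mc, ptL Y), (Mb, ptR Y))"
    hence "a = (Mc, ptL Y)" "b = (Mb, ptR Y)" by simp_all
    thus ?thesis using pts unfolding glue_def by simp
  qed
qed

lemma trel_map:
  assumes "lip_morph Y X h" "tri_space Y" "(p,q) \<in> trel Y"
  shows "((fst p, h (snd p)), (fst q, h (snd q))) \<in> trel X"
proof -
  let ?hh = "\<lambda>p. (fst p, h (snd p))"
  have hc: "\<forall>x\<in>carr Y. h x \<in> carr X" and pts: "h (ptT Y) = ptT X" "h (ptL Y) = ptL X" "h (ptR Y) = ptR X"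
    using assms(1) unfolding lip_morph_def by blast+
  have hstep: "(?hh a, ?hh b) \<in> glue X \<union> (glue X)\<inverse>" if "(a,b) \<in> glue Y \<union> (glue Y)\<inverse>" for a b
  proof -
    have "(a,b) \<in> glue Y \<or> (b,a) \<in> glue Y" using that by blast
    thus ?thesis
    proof
      assume "(a,b) \<in> glue Y"
      thus ?thesis using glue_map[OF pts] by blast
    next
      assume "(b,a) \<in> glue Y"
      hence "(?hh b, ?hh a) \<in> glue X" using glue_map[OF pts] by blast
      thus ?thesis by blast
    qed
  qed
  show ?thesis
  proof (cases "(p,q) \<in> Id_on (UNIV \<times> carr Y)")
    case True
    hence "p = q" "snd p \<in> carr Y" by (auto simp: Id_on_def)
    hence "(?hh p, ?hh q) \<in> Id_on (UNIV \<times> carr X)" using hc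
      by (simp add: Id_on_def mem_Times_iff)
    thus ?thesis unfolding trel_def by (rule UnI1)
  next
    case False
    hence "(p,q) \<in> (glue Y \<union> (glue Y)\<inverse>)\<^sup>+" using assms(3) unfolding trel_def by blast
    hence "(?hh p, ?hh q) \<in> (glue X \<union> (glue X)\<inverse>)\<^sup>+"
    proof (induction rule: trancl_induct)
      case (base y) thus ?case using hstep by (intro r_into_trancl) blast
    next
      case (step y z) thus ?case using hstep[of y z] by (meson trancl.trancl_into_trancl)
    qed
    thus ?thesis unfolding trel_def by (rule UnI2)
  qed
qed

definition rY :: "real \<Rightarrow> real \<times> real \<Rightarrow> real" where
  "rY \<delta> p = (if p = (-1,0) then 0 else if p = (-2,0) then 1 else \<delta> ^ nat \<lfloor>fst p\<rfloor>)"

definition cY :: "(real \<times> real) set" where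
  "cY = {(-1,0),(-2,0)} \<union> range (\<lambda>n::nat. (real n, 0))"

definition dY :: "real \<Rightarrow> real \<times> real \<Rightarrow> real \<times> real \<Rightarrow> real" where
  "dY \<delta> p q = (if p = q then 0 else max (rY \<delta> p) (rY \<delta> q))"

definition Yd :: "real \<Rightarrow> (real \<times> real) tms" where
  "Yd \<delta> = \<lparr>carr = cY, dst = dY \<delta>, ptT = (-1,0), ptL = (0,0), ptR = (-2,0)\<rparr>"

definition fY :: "real \<Rightarrow> real \<times> real \<Rightarrow> (mlab \<times> (real \<times> real)) set" where
  "fY \<delta> p = (if p = (-1,0) then tcls (Yd \<delta>) (Ma,(-1,0))
     else if p = (-2,0) then tcls (Yd \<delta>) (Mc,(-2,0))
     else if p = (0,0) then tcls (Yd \<delta>) (Mb,(0,0))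
     else tcls (Yd \<delta>) (Ma,(fst p - 1, 0)))"

lemma rY_T[simp]: "rY d (-1,0) = 0" and rY_R[simp]: "rY d (-2,0) = 1"
  by (auto simp: rY_def)

lemma rY_n[simp]: "rY d (real n, 0) = d ^ n"
  by (auto simp: rY_def)

lemma cY_cases: "p \<in> cY \<Longrightarrow> p = (-1,0) \<or> p = (-2,0) \<or> (\<exists>n. p = (real n, 0))"
  by (auto simp: cY_def)

lemma rY_bounds:
  assumes "0 < d" "d \<le> 1" "p \<in> cY"
  shows "0 \<le> rY d p \<and> rY d p \<le> 1 \<and> (rY d p = 0 \<longleftrightarrow> p = (-1,0))"
proof -
  consider "p = (-1,0)" | "p = (-2,0)" | n where "p = (real n, 0)" "p \<noteq> (-1,0)"
    using cY_cases[OF assms(3)] by fastforce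
  thus ?thesis
  proof cases
    case 1 thus ?thesis by simp
  next
    case 2 thus ?thesis by simp
  next
    case 3
    have "0 < d ^ n" using assms(1) by simp
    moreover have "d ^ n \<le> 1" using assms(1,2) by (simp add: power_le_one)
    ultimately show ?thesis using 3 assms(1) by simp
  qed
qed

lemma dY_nonneg: "0 \<le> rY d x \<Longrightarrow> 0 \<le> rY d y \<Longrightarrow> 0 \<le> dY d x y"
  unfolding dY_def by (simp add: le_max_iff_disj)

lemma dY_tri:
  assumes "0 \<le> rY d x" "0 \<le> rY d y" "0 \<le> rY d z"
  shows "dY d x z \<le> dY d x y + dY d y z"
proof (cases "x = z")
  case True thus ?thesis using dY_nonneg[of d x y] dY_nonneg[of d y z] assms by (simp add: dY_def)
next
  case F: False
  show ?thesis
  proof (cases "y = x \<or> y = z")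
    case True thus ?thesis using F assms dY_nonneg[of d x z] by (auto simp: dY_def)
  next
    case False
    hence "dY d x y + dY d y z = max (rY d x) (rY d y) + max (rY d y) (rY d z)"
      by (auto simp: dY_def)
    moreover have "dY d x z = max (rY d x) (rY d z)" using F by (simp add: dY_def)
    moreover have "max (rY d x) (rY d z) \<le> max (rY d x) (rY d y) + max (rY d y) (rY d z)"
      using assms by (simp add: max_def)
    ultimately show ?thesis by simp
  qed
qed

lemma tri_Y:
  assumes d: "0 < d" "d \<le> 1"
  shows "tri_space (Yd d)"
proof -
  have b: "\<And>p. p \<in> cY \<Longrightarrow> 0 \<le> rY d p \<and> rY d p \<le> 1 \<and> (rY d p = 0 \<longleftrightarrow> p = (-1,0))"
    using rY_bounds[OF d] by blast
  have m1: "\<forall>x\<in>cY. \<forall>y\<in>cY. 0 \<le> dY d x y \<and> dY d x y \<le> 1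
        \<and> (dY d x y = 0 \<longleftrightarrow> x = y) \<and> dY d x y = dY d y x"
  proof (intro ballI)
    fix x y assume xy: "x \<in> cY" "y \<in> cY"
    note bx = b[OF xy(1)] and bw = b[OF xy(2)]
    have 1: "0 \<le> dY d x y" using bx bw dY_nonneg by simp
    have 2: "dY d x y \<le> 1" using bx bw by (simp add: dY_def)
    have 3: "dY d x y = 0 \<longleftrightarrow> x = y"
    proof
      assume "dY d x y = 0"
      show "x = y"
      proof (rule ccontr)
        assume "x \<noteq> y"
        hence "max (rY d x) (rY d y) = 0" using \<open>dY d x y = 0\<close> by (simp add: dY_def)
        hence "rY d x = 0" "rY d y = 0" using bx bw by (auto simp: max_def split: if_splits)
        thus False using bx bw \<open>x \<noteq> y\<close> by simp
      qed
    qed (simp add: dY_def)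
    have 4: "dY d x y = dY d y x" by (simp add: dY_def max.commute)
    show "0 \<le> dY d x y \<and> dY d x y \<le> 1 \<and> (dY d x y = 0 \<longleftrightarrow> x = y) \<and> dY d x y = dY d y x"
      using 1 2 3 4 by blast
  qed
  have m2: "\<forall>x\<in>cY. \<forall>y\<in>cY. \<forall>z\<in>cY. dY d x z \<le> dY d x y + dY d y z"
  proof (intro ballI)
    fix x y z assume xyz: "x \<in> cY" "y \<in> cY" "z \<in> cY"
    show "dY d x z \<le> dY d x y + dY d y z"
      using b[OF xyz(1)] b[OF xyz(2)] b[OF xyz(3)] by (intro dY_tri) auto
  qed
  have d01: "rY d (0,0) = 1" using rY_n[of d 0] by simp
  have pts: "dY d (-1,0) (0,0) = 1" "dY d (0,0) (-2,0) = 1" "dY d (-1,0) (-2,0) = 1"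
    using d01 by (auto simp: dY_def)
  have cp: "(-1,0) \<in> cY" "(0::real,0::real) \<in> cY" "(-2,0) \<in> cY"
  proof -
    have "(real (0::nat), 0::real) \<in> cY" unfolding cY_def by blast
    thus "(0::real,0::real) \<in> cY" by simp
  qed (auto simp: cY_def)
  have ne: "(-1::real,0::real) \<noteq> (0,0)" "(0::real,0::real) \<noteq> (-2,0)" "(-1::real,0::real) \<noteq> (-2,0)"
    by auto
  have cr: "carr (Yd d) = cY" "dst (Yd d) = dY d" "ptT (Yd d) = (-1,0)" "ptL (Yd d) = (0,0)"
    "ptR (Yd d) = (-2,0)" by (auto simp: Yd_def)
  show ?thesis unfolding tri_space_def cr using m1 m2 pts cp ne by blast
qed

lemma cY_pts: "(-1,0) \<in> cY" "(0::real,0::real) \<in> cY" "(-2,0) \<in> cY"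
proof -
  have "(real (0::nat), 0::real) \<in> cY" unfolding cY_def by blast
  thus "(0::real,0::real) \<in> cY" by simp
qed (auto simp: cY_def)

lemma fY_rep:
  assumes "x \<in> cY"
  shows "\<exists>m s. fY d x = tcls (Yd d) (m,s) \<and> s \<in> cY \<and>
     (x \<noteq> (0,0) \<and> x \<noteq> (-2,0) \<longrightarrow> m = Ma \<and> rY d s * d = rY d x)"
proof -
  consider "x = (-1,0)" | "x = (-2,0)" | "x = (0,0)" | n where "x = (real (Suc n), 0)"
    using cY_cases[OF assms] by (metis of_nat_0 not0_implies_Suc)
  thus ?thesis
  proof cases
    case 1 thus ?thesis
      by (intro exI[of _ Ma] exI[of _ "(-1::real,0::real)"]) (auto simp: fY_def cY_def)
  next
    case 2 thus ?thesis by (auto simp: fY_def cY_def)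
  next
    case 3 thus ?thesis using cY_pts
      by (intro exI[of _ Mb] exI[of _ "(0::real,0::real)"]) (auto simp: fY_def)
  next
    case 4
    have "fY d x = tcls (Yd d) (Ma, (real n, 0))" using 4 by (auto simp: fY_def)
    moreover have "(real n, 0::real) \<in> cY" by (auto simp: cY_def)
    ultimately show ?thesis
    proof (intro exI[of _ Ma] exI[of _ "(real n, 0::real)"] conjI impI)
      show "rY d (real n, 0) * d = rY d x" unfolding 4 rY_n by simp
    qed auto
  qed
qed

lemma lip_Y:
  assumes d: "0 < d" "d \<le> 1"
  shows "lip_morph (Yd d) (tensor (Yd d)) (fY d)"
proof -
  have TY: "tri_space (Yd d)" by (rule tri_Y[OF d])
  have cr: "carr (Yd d) = cY" "dst (Yd d) = dY d" by (auto simp: Yd_def)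
  have b: "\<And>p. p \<in> cY \<Longrightarrow> 0 \<le> rY d p \<and> rY d p \<le> 1 \<and> (rY d p = 0 \<longleftrightarrow> p = (-1,0))"
    using rY_bounds[OF d] by blast
  have into: "\<forall>x\<in>cY. fY d x \<in> carr (tensor (Yd d))"
  proof
    fix x assume "x \<in> cY"
    then obtain m s where "fY d x = tcls (Yd d) (m,s)" "s \<in> cY" using fY_rep by blast
    thus "fY d x \<in> carr (tensor (Yd d))"
      unfolding tensor_def tcls_def using cr by (auto intro: quotientI)
  qed
  have pts: "fY d (-1,0) = ptT (tensor (Yd d))" "fY d (0,0) = ptL (tensor (Yd d))"
     "fY d (-2,0) = ptR (tensor (Yd d))"
    by (auto simp: fY_def tensor_def Yd_def)
  have lip: "\<forall>x\<in>cY. \<forall>y\<in>cY. tdist (Yd d) (fY d x) (fY d y) \<le> (1/d) * dY d x y"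
  proof (intro ballI)
    fix x y assume xy: "x \<in> cY" "y \<in> cY"
    obtain m s where ms: "fY d x = tcls (Yd d) (m,s)" "s \<in> cY"
      "x \<noteq> (0,0) \<and> x \<noteq> (-2,0) \<longrightarrow> m = Ma \<and> rY d s * d = rY d x"
      using fY_rep[OF xy(1)] by blast
    obtain m' s' where ms': "fY d y = tcls (Yd d) (m',s')" "s' \<in> cY"
      "y \<noteq> (0,0) \<and> y \<noteq> (-2,0) \<longrightarrow> m' = Ma \<and> rY d s' * d = rY d y"
      using fY_rep[OF xy(2)] by blast
    have up: "tdist (Yd d) (fY d x) (fY d y) \<le> pdist (dY d) (m,s) (m',s')"
      using tdist_upper[OF TY, of "(m,s)" "(m',s')"] ms ms' cr by auto
    have le1: "pdist (dY d) (m,s) (m',s') \<le> 1"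
      using pdist_le1[OF TY, of "(m,s)" "(m',s')"] ms ms' cr by auto
    show "tdist (Yd d) (fY d x) (fY d y) \<le> (1/d) * dY d x y"
    proof (cases "x = y")
      case True
      hence "m = m' \<and> s = s' \<or> fY d x = fY d y" by simp
      have "tdist (Yd d) (fY d x) (fY d y) \<le> pdist (dY d) (m,s) (m,s)"
        using tdist_upper[OF TY, of "(m,s)" "(m,s)"] ms True cr by auto
      thus ?thesis using True by (simp add: pdist_def dY_def)
    next
      case False
      show ?thesis
      proof (cases "x \<in> {(0,0),(-2,0)} \<or> y \<in> {(0,0),(-2,0)}")
        case True
        have r00: "rY d (0,0) = 1" using rY_n[of d 0] by simp
        have "dY d x y = 1" using True False b[OF xy(1)] b[OF xy(2)] r00
          unfolding dY_def by (auto simp: max_def)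
        moreover have "1 \<le> 1/d" using d by simp
        ultimately show ?thesis using up le1 by simp
      next
        case nT: False
        have mm: "m = Ma" "m' = Ma" "rY d s * d = rY d x" "rY d s' * d = rY d y"
          using ms(3) ms'(3) nT by auto
        have "pdist (dY d) (m,s) (m',s') = dY d s s' / 2" using mm by (simp add: pdist_def)
        also have "\<dots> \<le> max (rY d s) (rY d s') / 2"
          using b[OF ms(2)] b[OF ms'(2)] by (auto simp: dY_def)
        also have "\<dots> = max (rY d x) (rY d y) / (2*d)"
        proof -
          have "max (rY d x) (rY d y) = max (rY d s) (rY d s') * d"
            using mm d by (simp add: max_mult_distrib_right)
          thus ?thesis using d by simp
        qed
        also have "\<dots> \<le> max (rY d x) (rY d y) / d"
          using d b[OF xy(1)] b[OF xy(2)] by (auto simp: field_simps max_def)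
        also have "\<dots> = (1/d) * dY d x y" using False by (simp add: dY_def)
        finally show ?thesis using up by simp
      qed
    qed
  qed
  have dt: "dst (tensor (Yd d)) = tdist (Yd d)" by (simp add: tensor_def)
  have "\<forall>x\<in>carr (Yd d). \<forall>y\<in>carr (Yd d).
      dst (tensor (Yd d)) (fY d x) (fY d y) \<le> (1/d) * dst (Yd d) x y"
    using lip dt cr by simp
  moreover have "0 \<le> 1/d" using d by simp
  moreover have "ptT (Yd d) = (-1,0)" "ptL (Yd d) = (0,0)" "ptR (Yd d) = (-2,0)"
    by (auto simp: Yd_def)
  ultimately show ?thesis unfolding lip_morph_def using into pts cr by metis
qed


theorem mainTheorem13:
  shows "\<not> final_coalg TYPE(real \<times> real) Sierp sigma"
proof
  assume fin: "final_coalg TYPE(real \<times> real) Sierp sigma"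
  have TS: "tri_space Sierp" and LS: "lip_morph Sierp (tensor Sierp) sigma"
    using fin unfolding final_coalg_def is_coalg_def by auto
  obtain Ks where Ks: "Ks \<ge> 0" "\<forall>x\<in>carr Sierp. \<forall>y\<in>carr Sierp.
      dst (tensor Sierp) (sigma x) (sigma y) \<le> Ks * dst Sierp x y"
    using LS unfolding lip_morph_def by blast
  have sT: "sigma (ptT Sierp) = tcls Sierp (Ma, ptT Sierp)"
    using LS unfolding lip_morph_def tensor_def by simp
  have Tc: "ptT Sierp \<in> carr Sierp" "ptL Sierp \<in> carr Sierp" using TS unfolding tri_space_def by auto
  define d where "d = 1 / (4 * (Ks + 1))"
  have d: "0 < d" "d \<le> 1" using Ks(1) by (auto simp: d_def field_simps)
  have d2: "2 * (Ks + 1) * d = 1/2" using Ks(1) by (simp add: d_def field_simps)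
  have "is_coalg (Yd d) (fY d)" unfolding is_coalg_def using tri_Y[OF d] lip_Y[OF d] by simp
  then obtain h where h: "coalg_morph (Yd d) (fY d) Sierp sigma h"
    using fin unfolding final_coalg_def by blast
  have LH: "lip_morph (Yd d) Sierp h" and eq: "\<forall>y\<in>cY. sigma (h y) = tmap (Yd d) Sierp h (fY d y)"
    using h unfolding coalg_morph_def by (auto simp: Yd_def)
  have hc: "\<forall>x\<in>cY. h x \<in> carr Sierp" and hT: "h (-1,0) = ptT Sierp" and hL: "h (0,0) = ptL Sierp"
    using LH unfolding lip_morph_def by (auto simp: Yd_def)
  obtain Kh where Kh: "Kh \<ge> 0" "\<forall>x\<in>cY. \<forall>y\<in>cY. dst Sierp (h x) (h y) \<le> Kh * dY d x y"
    using LH unfolding lip_morph_def by (auto simp: Yd_def)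
  have inc: "(real n, 0::real) \<in> cY" for n by (auto simp: cY_def)
  have Tin: "(-1, 0::real) \<in> cY" by (auto simp: cY_def)
  define e where "e n = dst Sierp (h (real n, 0)) (ptT Sierp)" for n
  have e_nonneg: "0 \<le> e n" for n
    using TS hc inc Tc unfolding e_def tri_space_def by auto
  have e0: "e 0 = 1" using TS hL unfolding e_def tri_space_def by auto
  have e_up: "e n \<le> Kh * d ^ n" for n
  proof -
    have "e n = dst Sierp (h (real n, 0)) (h (-1,0))" using hT by (simp add: e_def)
    also have "\<dots> \<le> Kh * dY d (real n, 0) (-1,0)" using Kh(2) inc Tin by blast
    also have "dY d (real n, 0) (-1,0) = d ^ n"
    proof -
      have pos: "\<not> d ^ n \<le> 0" using d(1) by (simp add: not_le)
      show ?thesis using pos by (simp add: dY_def max_def)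
    qed
    finally show ?thesis .
  qed
  have e_step: "e n \<le> 2 * (Ks + 1) * e (Suc n)" for n
  proof -
    let ?u = "(real (Suc n), 0::real)" and ?v = "(real n, 0::real)"
    have fu: "fY d ?u = tcls (Yd d) (Ma, ?v)" by (auto simp: fY_def)
    define p where "p = (SOME p. p \<in> tcls (Yd d) (Ma, ?v))"
    have "(Ma, ?v) \<in> tcls (Yd d) (Ma, ?v)" using in_tcls[of "(Ma, ?v)" "Yd d"] inc
      by (auto simp: Yd_def)
    hence pin: "p \<in> tcls (Yd d) (Ma, ?v)" unfolding p_def by (rule someI)
    have su: "sigma (h ?u) = tcls Sierp (fst p, h (snd p))"
      using eq inc[of "Suc n"] fu unfolding tmap_def p_def by (simp add: Let_def)
    have tr: "((Ma, ?v), p) \<in> trel (Yd d)" using pin unfolding tcls_def by auto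
    have tr2: "((Ma, h ?v), (fst p, h (snd p))) \<in> trel Sierp"
      using trel_map[OF LH tri_Y[OF d] tr] by simp
    have hpc: "(fst p, h (snd p)) \<in> UNIV \<times> carr Sierp" using trel_carr[OF TS tr2] by blast
    have g1: "gT Sierp (fst p, h (snd p)) = e n / 2"
      using g_inv[OF TS tr2] unfolding gT_def e_def by simp
    have g2: "gT Sierp (Ma, ptT Sierp) = 0" using TS Tc unfolding gT_def tri_space_def by auto
    have "e n / 2 \<le> tdist Sierp (tcls Sierp (fst p, h (snd p))) (tcls Sierp (Ma, ptT Sierp))"
      using tdist_lower[OF TS hpc, of "(Ma, ptT Sierp)"] Tc g1 g2 by simp
    also have "\<dots> = dst (tensor Sierp) (sigma (h ?u)) (sigma (ptT Sierp))"
      using su sT by (simp add: tensor_def)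
    also have "\<dots> \<le> Ks * dst Sierp (h ?u) (ptT Sierp)"
      using Ks(2) hc inc Tc by blast
    also have "\<dots> = Ks * e (Suc n)" by (simp add: e_def)
    also have "\<dots> \<le> (Ks + 1) * e (Suc n)" using e_nonneg[of "Suc n"] by (simp add: algebra_simps)
    finally have "e n / 2 \<le> (Ks + 1) * e (Suc n)" .
    moreover have "2 * (Ks + 1) * e (Suc n) = 2 * ((Ks + 1) * e (Suc n))" by simp
    ultimately show ?thesis by linarith
  qed
  have key: "1 \<le> (2 * (Ks + 1)) ^ n * e n" for n
  proof (induction n)
    case 0 thus ?case using e0 by simp
  next
    case (Suc n)
    have "(2 * (Ks + 1)) ^ n * e n \<le> (2 * (Ks + 1)) ^ n * (2 * (Ks + 1) * e (Suc n))"
      using e_step[of n] Ks(1) by (intro mult_left_mono) auto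
    thus ?case using Suc by (simp add: algebra_simps)
  qed
  have bnd: "1 \<le> Kh * (1/2) ^ n" for n
  proof -
    have "1 \<le> (2 * (Ks + 1)) ^ n * e n" by (rule key)
    also have "\<dots> \<le> (2 * (Ks + 1)) ^ n * (Kh * d ^ n)"
      using e_up[of n] Ks(1) by (intro mult_left_mono) auto
    also have "\<dots> = Kh * (2 * (Ks + 1) * d) ^ n" by (simp add: power_mult_distrib)
    finally have "1 \<le> Kh * (2 * (Ks + 1) * d) ^ n" .
    thus ?thesis unfolding d2 .
  qed
  obtain n where n: "(1/2::real) ^ n < 1 / (Kh + 1)"
    using real_arch_pow_inv[of "1 / (Kh + 1)" "1/2"] Kh(1) by auto
  have "Kh * (1/2) ^ n \<le> (Kh + 1) * (1/2::real) ^ n" by simp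
  also have "\<dots> < (Kh + 1) * (1 / (Kh + 1))" using n Kh(1) by (intro mult_strict_left_mono) auto
  also have "\<dots> = 1" using Kh(1) by simp
  finally show False using bnd[of n] by simp
qed

end
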